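(* Let $Z$ be a unit Fréchet random variable, i.e. $\Pr(Z \le z) = \exp(-1/z)$ for $z > 0$. Let $\mathbf A = (A_1, \ldots, A_d)$ be a random vector in $\mathbb R^d$, independent of $Z$, such that $0 < \mathbb E[\max(A_j, 0)] < \infty$ for every $j \in \{1, \ldots, d\}$. Put $\mathbf X = (X_1, \ldots, X_d) = (A_1 Z, \ldots, A_d Z)$. Then for every $\mathbf x = (x_1, \ldots, x_d) \in (0, \infty)^d$, \[ \lim_{n \to \infty} \Pr[ X_1 \le n x_1, \ldots, X_d \le n x_d ]^n = \exp\bigl\{ - \mathbb E[ \max(A_1/x_1, \ldots, A_d/x_d, 0) ] \bigr\}. \] *)

theory Defs
  imports "HOL-Probability.Probability"
begin

end

theory Submission
  imports Defs "HOL-Real_Asymp.Real_Asymp"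
begin

lemma ptw:
  fixes b :: real assumes "b \<ge> 0"
  shows "(\<lambda>n::nat. real n * (1 - exp (- b / real n))) \<longlonglongrightarrow> b"
proof (cases "b = 0")
  case True then show ?thesis by simp
next
  case False
  then have "b > 0" using assms by simp
  then show ?thesis by real_asymp
qed

lemma lim_aux:
  fixes c p :: "nat \<Rightarrow> real"
  assumes c: "c \<longlonglongrightarrow> L" and p: "\<And>n. n \<ge> 1 \<Longrightarrow> p n = 1 - c n / real n"
  shows "(\<lambda>n. p n ^ n) \<longlonglongrightarrow> exp (- L)"
proof -
  have d: "(\<lambda>n. c n / real n) \<longlonglongrightarrow> 0"
    using tendsto_mult[OF c lim_inverse_n] by (simp add: divide_inverse)
  have p1: "(\<lambda>n. 1 - c n / real n) \<longlonglongrightarrow> 1"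
    using tendsto_diff[OF tendsto_const d, of 1] by simp
  have pl: "p \<longlonglongrightarrow> 1"
    by (rule Lim_transform_eventually[OF p1]) (auto simp: p eventually_sequentially intro!: exI[of _ 1])
  have ev: "eventually (\<lambda>n. p n > 1/2 \<and> n \<ge> 1) sequentially"
    by (intro eventually_conj order_tendstoD(1)[OF pl] eventually_ge_at_top) simp
  have up: "(\<lambda>n. - c n) \<longlonglongrightarrow> - L" using c by (intro tendsto_intros)
  have lo: "(\<lambda>n. - c n / p n) \<longlonglongrightarrow> - L"
    using tendsto_divide[OF up pl] by simp
  have key: "(\<lambda>n. real n * ln (p n)) \<longlonglongrightarrow> - L"
  proof (rule tendsto_sandwich[OF _ _ lo up])
    show "eventually (\<lambda>n. - c n / p n \<le> real n * ln (p n)) sequentially"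
      using ev
    proof (rule eventually_mono)
      fix n assume n: "p n > 1/2 \<and> n \<ge> 1"
      have pp: "p n > 0" using n by simp
      have "ln (1 / p n) \<le> 1 / p n - 1" by (rule ln_le_minus_one) (use pp in simp)
      then have "1 - 1 / p n \<le> ln (p n)" using pp by (simp add: ln_div)
      then have "real n * (1 - 1 / p n) \<le> real n * ln (p n)" by (intro mult_left_mono) auto
      moreover have cn: "c n = real n - real n * p n" using p[of n] n by (simp add: field_simps)
      have "real n * (1 - 1 / p n) = - c n / p n"
        using pp unfolding cn by (simp add: field_simps)
      ultimately show "- c n / p n \<le> real n * ln (p n)" by simp
    qed
    show "eventually (\<lambda>n. real n * ln (p n) \<le> - c n) sequentially"
      using ev
    proof (rule eventually_mono)
      fix n assume n: "p n > 1/2 \<and> n \<ge> 1"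
      have pp: "p n > 0" using n by simp
      have "ln (p n) \<le> p n - 1" by (rule ln_le_minus_one) (use pp in simp)
      then have "real n * ln (p n) \<le> real n * (p n - 1)" by (intro mult_left_mono) auto
      moreover have "real n * (p n - 1) = - c n"
        using n pp p[of n] by (simp add: field_simps)
      ultimately show "real n * ln (p n) \<le> - c n" by simp
    qed
  qed
  have "(\<lambda>n. exp (real n * ln (p n))) \<longlonglongrightarrow> exp (- L)"
    by (rule tendsto_exp[OF key])
  then show ?thesis
  proof (rule Lim_transform_eventually)
    show "eventually (\<lambda>n. exp (real n * ln (p n)) = p n ^ n) sequentially"
      using ev by (rule eventually_mono) (auto simp: exp_of_nat_mult)
  qed
qed

theorem mainTheorem1:
  fixes M :: "'a measure" and Z :: "'a \<Rightarrow> real" and A :: "'a \<Rightarrow> real ^ 'd"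
    and x :: "real ^ 'd"
  assumes "prob_space M"
    and Z_rv: "Z \<in> borel_measurable M"
    and A_rv: "A \<in> borel_measurable M"
    and Z_frechet: "\<And>z. z > 0 \<Longrightarrow> measure M {\<omega> \<in> space M. Z \<omega> \<le> z} = exp (- 1 / z)"
    and indep: "prob_space.indep_set M
        (sigma_sets (space M) {Z -` B \<inter> space M | B. B \<in> sets (borel :: real measure)})
        (sigma_sets (space M) {A -` B \<inter> space M | B. B \<in> sets (borel :: (real ^ 'd) measure)})"
    and A_int: "\<And>j. integrable M (\<lambda>\<omega>. max (A \<omega> $ j) 0)"
    and A_pos: "\<And>j. (\<integral>\<omega>. max (A \<omega> $ j) 0 \<partial>M) > 0"
    and x_pos: "\<And>j. x $ j > 0"
  shows "(\<lambda>n::nat. (measure M {\<omega> \<in> space M. \<forall>j. A \<omega> $ j * Z \<omega> \<le> real n * x $ j}) ^ n)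
           \<longlonglongrightarrow> exp (- (\<integral>\<omega>. max (Max (range (\<lambda>j. A \<omega> $ j / x $ j))) 0 \<partial>M))"
proof -
  interpret prob_space M by fact
  define g where "g a = max (Max (range (\<lambda>j. a $ j / x $ j))) 0" for a :: "real ^ 'd"
  have g_meas: "g \<in> borel_measurable borel"
    unfolding g_def by measurable
  note [measurable] = Z_rv A_rv g_meas
  have g_nn: "g a \<ge> 0" for a unfolding g_def by simp
  have Max_le: "Max (range (\<lambda>j. a $ j / x $ j)) \<le> t \<longleftrightarrow> (\<forall>j. a $ j / x $ j \<le> t)" for a t
    by (subst Max_le_iff) auto
  have Z0: "measure M {\<omega> \<in> space M. Z \<omega> \<le> 0} = 0"
  proof -
    have le: "measure M {\<omega> \<in> space M. Z \<omega> \<le> 0} \<le> exp (- real (Suc k))" for k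
    proof -
      have "measure M {\<omega> \<in> space M. Z \<omega> \<le> 0} \<le> measure M {\<omega> \<in> space M. Z \<omega> \<le> 1 / real (Suc k)}"
        by (rule finite_measure_mono) (auto intro: order_trans[of _ 0])
      also have "\<dots> = exp (- real (Suc k))" by (subst Z_frechet) auto
      finally show ?thesis .
    qed
    have "(\<lambda>k. exp (- real (Suc k))) \<longlonglongrightarrow> 0" by real_asymp
    then have "measure M {\<omega> \<in> space M. Z \<omega> \<le> 0} \<le> 0"
      by (rule LIMSEQ_le_const) (use le in auto)
    then show ?thesis using measure_nonneg[of M] by (meson antisym)
  qed
  have AEZ: "AE \<omega> in M. Z \<omega> > 0"
  proof -
    have "AE \<omega> in M. \<omega> \<notin> {\<omega> \<in> space M. Z \<omega> \<le> 0}"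
      by (rule AE_not_in) (use Z0 Z_rv in \<open>auto simp: emeasure_eq_measure\<close>)
    then show ?thesis by (auto elim: AE_mp)
  qed
  have ptw_iff: "(\<forall>j. a $ j * z \<le> t * x $ j) \<longleftrightarrow> z * g a \<le> t" if z: "z > 0" and t: "t \<ge> 0" for a z t
  proof -
    have "z * g a \<le> t \<longleftrightarrow> g a \<le> t / z" using z by (simp add: pos_le_divide_eq mult.commute)
    also have "\<dots> \<longleftrightarrow> (\<forall>j. a $ j / x $ j \<le> t / z)"
      using z t by (simp add: g_def Max_le)
    also have "\<dots> \<longleftrightarrow> (\<forall>j. a $ j * z \<le> t * x $ j)"
    proof -
      have "a $ j / x $ j \<le> t / z \<longleftrightarrow> a $ j * z \<le> t * x $ j" for j
        using z x_pos[of j] by (simp add: field_simps)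
      then show ?thesis by simp
    qed
    finally show ?thesis by simp
  qed
  have ev_eq: "measure M {\<omega> \<in> space M. \<forall>j. A \<omega> $ j * Z \<omega> \<le> real n * x $ j}
      = measure M {\<omega> \<in> space M. Z \<omega> * g (A \<omega>) \<le> real n}" for n :: nat
  proof (rule measure_eq_AE)
    show "AE \<omega> in M. (\<omega> \<in> {\<omega> \<in> space M. \<forall>j. A \<omega> $ j * Z \<omega> \<le> real n * x $ j}) =
        (\<omega> \<in> {\<omega> \<in> space M. Z \<omega> * g (A \<omega>) \<le> real n})"
      using AEZ by eventually_elim (simp add: ptw_iff)
    have "{\<omega> \<in> space M. \<forall>j. A \<omega> $ j * Z \<omega> \<le> real n * x $ j}
       = {\<omega> \<in> space M. \<forall>j\<in>UNIV. A \<omega> $ j * Z \<omega> \<le> real n * x $ j}" by simp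
    also have "\<dots> \<in> sets M"
      apply measurable
      using A_rv Z_rv by (auto intro: measurable_compose[OF _ borel_measurable_nth])
    finally show "{\<omega> \<in> space M. \<forall>j. A \<omega> $ j * Z \<omega> \<le> real n * x $ j} \<in> sets M" .
    show "{\<omega> \<in> space M. Z \<omega> * g (A \<omega>) \<le> real n} \<in> sets M" by measurable
  qed
  define Bv where "Bv \<omega> = g (A \<omega>)" for \<omega>
  have Bv_meas[measurable]: "Bv \<in> borel_measurable M" unfolding Bv_def by measurable
  have sub: "sigma_sets (space M) {Bv -` B \<inter> space M | B. B \<in> sets (borel :: real measure)}
     \<subseteq> sigma_sets (space M) {A -` B \<inter> space M | B. B \<in> sets (borel :: (real ^ 'd) measure)}"
  proof (rule sigma_sets_mono')
    show "{Bv -` B \<inter> space M | B. B \<in> sets (borel :: real measure)}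
     \<subseteq> {A -` B \<inter> space M | B. B \<in> sets (borel :: (real ^ 'd) measure)}"
    proof safe
      fix B :: "real set" assume B: "B \<in> sets borel"
      have "Bv -` B \<inter> space M = A -` (g -` B) \<inter> space M" by (auto simp: Bv_def)
      moreover have "g -` B \<in> sets borel"
        using measurable_sets[OF g_meas B] by simp
      ultimately show "\<exists>B'. Bv -` B \<inter> space M = A -` B' \<inter> space M \<and> B' \<in> sets borel" by blast
    qed
  qed
  have "indep_set (sigma_sets (space M) {Z -` B \<inter> space M | B. B \<in> sets (borel :: real measure)})
     (sigma_sets (space M) {Bv -` B \<inter> space M | B. B \<in> sets (borel :: real measure)})"
    using indep sub unfolding indep_sets2_eq by blast
  then have iv: "indep_var borel Z borel Bv" by (simp add: indep_var_eq)
  then have deq: "distr M borel Z \<Otimes>\<^sub>M distr M borel Bv = distr M (borel \<Otimes>\<^sub>M borel) (\<lambda>\<omega>. (Z \<omega>, Bv \<omega>))"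
    by (simp add: indep_var_distribution_eq)
  interpret DZ: prob_space "distr M borel Z" by (rule prob_space_distr) simp
  interpret DA: prob_space "distr M borel Bv" by (rule prob_space_distr) simp
  interpret P: pair_prob_space "distr M borel Z" "distr M borel Bv" ..
  have int_exp: "integrable M (\<lambda>\<omega>. exp (- g (A \<omega>) / t))" if "t > 0" for t
  proof (rule integrable_const_bound[where B=1])
    show "AE \<omega> in M. norm (exp (- g (A \<omega>) / t)) \<le> 1"
      using that g_nn by auto
  qed measurable
  have zmeas: "measure M {\<omega> \<in> space M. Z \<omega> * b \<le> t} = exp (- b / t)" if "t > 0" "b \<ge> 0" for b t
  proof (cases "b = 0")
    case True
    then show ?thesis using that by (simp add: prob_space)
  next
    case False
    then have b: "b > 0" using that by simp
    have "{\<omega> \<in> space M. Z \<omega> * b \<le> t} = {\<omega> \<in> space M. Z \<omega> \<le> t / b}"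
      using b by (auto simp: pos_le_divide_eq)
    then show ?thesis using b that by (simp add: Z_frechet)
  qed
  have prob_eq: "measure M {\<omega> \<in> space M. Z \<omega> * g (A \<omega>) \<le> t} = (\<integral>\<omega>. exp (- g (A \<omega>) / t) \<partial>M)"
    if t: "t > 0" for t
  proof -
    define S where "S = {p :: real \<times> real. fst p * snd p \<le> t}"
    have "S = {p \<in> space (borel \<Otimes>\<^sub>M borel). fst p * snd p \<le> t}"
      by (auto simp: S_def space_pair_measure)
    also have "\<dots> \<in> sets (borel \<Otimes>\<^sub>M borel)" by measurable
    finally have S: "S \<in> sets (borel \<Otimes>\<^sub>M borel)" .
    have S': "S \<in> sets (distr M borel Z \<Otimes>\<^sub>M distr M borel Bv)"
      using S by (simp add: sets_pair_measure_cong[OF sets_distr sets_distr])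
    have "emeasure M {\<omega> \<in> space M. Z \<omega> * g (A \<omega>) \<le> t} = emeasure (distr M (borel \<Otimes>\<^sub>M borel) (\<lambda>\<omega>. (Z \<omega>, Bv \<omega>))) S"
      using S by (subst emeasure_distr) (auto simp: S_def Bv_def intro!: arg_cong[where f="emeasure M"])
    also have "\<dots> = emeasure (distr M borel Z \<Otimes>\<^sub>M distr M borel Bv) S" by (simp add: deq)
    also have "\<dots> = (\<integral>\<^sup>+a. emeasure (distr M borel Z) ((\<lambda>z. (z, a)) -` S) \<partial>distr M borel Bv)"
      by (rule P.emeasure_pair_measure_alt2[OF S'])
    also have "\<dots> = (\<integral>\<^sup>+a. ennreal (exp (- max a 0 / t)) \<partial>distr M borel Bv)"
    proof (rule nn_integral_cong_AE)
      have "AE a in distr M borel Bv. a \<ge> 0"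
        by (subst AE_distr_iff) (auto simp: Bv_def g_nn)
      then show "AE a in distr M borel Bv. emeasure (distr M borel Z) ((\<lambda>z. (z, a)) -` S) = ennreal (exp (- max a 0 / t))"
      proof eventually_elim
        fix a :: real assume a: "a \<ge> 0"
        have "emeasure (distr M borel Z) ((\<lambda>z. (z, a)) -` S) = emeasure M {\<omega> \<in> space M. Z \<omega> * a \<le> t}"
          by (subst emeasure_distr) (auto simp: S_def intro!: arg_cong[where f="emeasure M"])
        also have "\<dots> = ennreal (exp (- max a 0 / t))"
          using zmeas[OF t a] a by (simp add: emeasure_eq_measure)
        finally show "emeasure (distr M borel Z) ((\<lambda>z. (z, a)) -` S) = ennreal (exp (- max a 0 / t))" .
      qed
    qed
    also have "\<dots> = (\<integral>\<^sup>+\<omega>. ennreal (exp (- max (Bv \<omega>) 0 / t)) \<partial>M)"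
      by (rule nn_integral_distr) measurable
    also have "\<dots> = (\<integral>\<^sup>+\<omega>. ennreal (exp (- g (A \<omega>) / t)) \<partial>M)"
      by (simp add: Bv_def g_nn max_absorb1)
    also have "\<dots> = ennreal (\<integral>\<omega>. exp (- g (A \<omega>) / t) \<partial>M)"
      by (rule nn_integral_eq_integral[OF int_exp[OF t]]) simp
    finally show ?thesis
      by (simp add: emeasure_eq_measure)
  qed
  have Bv_int: "integrable M Bv"
  proof (rule Bochner_Integration.integrable_bound[where f="\<lambda>\<omega>. \<Sum>j\<in>UNIV. max (A \<omega> $ j) 0 / x $ j"])
    show "integrable M (\<lambda>\<omega>. \<Sum>j\<in>UNIV. max (A \<omega> $ j) 0 / x $ j)"
      by (intro Bochner_Integration.integrable_sum Bochner_Integration.integrable_divide A_int)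
    show "AE \<omega> in M. norm (Bv \<omega>) \<le> norm (\<Sum>j\<in>UNIV. max (A \<omega> $ j) 0 / x $ j)"
    proof (rule AE_I2)
      fix \<omega>
      have nn: "\<And>j. 0 \<le> max (A \<omega> $ j) 0 / x $ j" using x_pos by (simp add: less_imp_le)
      have "\<And>j. A \<omega> $ j / x $ j \<le> (\<Sum>j\<in>UNIV. max (A \<omega> $ j) 0 / x $ j)"
      proof -
        fix j
        have "A \<omega> $ j / x $ j \<le> max (A \<omega> $ j) 0 / x $ j"
          using x_pos[of j] by (intro divide_right_mono) (auto simp: less_imp_le)
        also have "\<dots> \<le> (\<Sum>j\<in>UNIV. max (A \<omega> $ j) 0 / x $ j)"
          by (rule member_le_sum) (auto simp: nn)
        finally show "A \<omega> $ j / x $ j \<le> (\<Sum>j\<in>UNIV. max (A \<omega> $ j) 0 / x $ j)" .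
      qed
      moreover have "0 \<le> (\<Sum>j\<in>UNIV. max (A \<omega> $ j) 0 / x $ j)" by (rule sum_nonneg) (use nn in auto)
      ultimately show "norm (Bv \<omega>) \<le> norm (\<Sum>j\<in>UNIV. max (A \<omega> $ j) 0 / x $ j)"
        by (simp add: Bv_def g_def Max_le)
    qed
  qed measurable
  define p where "p n = (\<integral>\<omega>. exp (- Bv \<omega> / real n) \<partial>M)" for n :: nat
  define c where "c n = (\<integral>\<omega>. real n * (1 - exp (- Bv \<omega> / real n)) \<partial>M)" for n :: nat
  have c_lim: "c \<longlonglongrightarrow> (\<integral>\<omega>. Bv \<omega> \<partial>M)"
    unfolding c_def
  proof (rule integral_dominated_convergence[where w = Bv])
    show "AE \<omega> in M. (\<lambda>n. real n * (1 - exp (- Bv \<omega> / real n))) \<longlonglongrightarrow> Bv \<omega>"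
      by (rule AE_I2) (rule ptw, simp add: Bv_def g_nn)
    show "AE \<omega> in M. norm (real n * (1 - exp (- Bv \<omega> / real n))) \<le> Bv \<omega>" for n
    proof (rule AE_I2)
      fix \<omega>
      have b: "Bv \<omega> \<ge> 0" by (simp add: Bv_def g_nn)
      have e1: "exp (- Bv \<omega> / real n) \<le> 1" using b by simp
      have e2: "1 + (- Bv \<omega> / real n) \<le> exp (- Bv \<omega> / real n)" by (rule exp_ge_add_one_self)
      show "norm (real n * (1 - exp (- Bv \<omega> / real n))) \<le> Bv \<omega>"
      proof (cases "n = 0")
        case True then show ?thesis using b by simp
      next
        case False
        then have "real n * (1 - exp (- Bv \<omega> / real n)) \<le> real n * (Bv \<omega> / real n)"
          using e2 by (intro mult_left_mono) auto
        then show ?thesis using e1 False by simp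
      qed
    qed
  qed (auto simp: Bv_int)
  have pc: "measure M {\<omega> \<in> space M. \<forall>j. A \<omega> $ j * Z \<omega> \<le> real n * x $ j} = 1 - c n / real n"
    if n: "n \<ge> 1" for n :: nat
  proof -
    have t: "real n > 0" using n by simp
    have "measure M {\<omega> \<in> space M. \<forall>j. A \<omega> $ j * Z \<omega> \<le> real n * x $ j} = p n"
      unfolding ev_eq prob_eq[OF t] p_def Bv_def ..
    moreover have "c n = real n * (1 - p n)"
      unfolding c_def p_def using int_exp[OF t]
      by (simp add: Bv_def prob_space)
    ultimately show ?thesis using t by simp
  qed
  have "(\<lambda>n. measure M {\<omega> \<in> space M. \<forall>j. A \<omega> $ j * Z \<omega> \<le> real n * x $ j} ^ n) \<longlonglongrightarrow> exp (- (\<integral>\<omega>. Bv \<omega> \<partial>M))"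
    by (rule lim_aux[OF c_lim pc])
  then show ?thesis by (simp add: Bv_def g_def)
qed

end
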